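(* Let $A=[a_{ij}]\in M_{m,n}(\mathbb{R})$ have rank $r>1$ and be diagonally eliminable up to $r$, and let $k$ be an integer with $0\leq k<r$. Then $A^{(2k)}=[a^{(2k)}_{ij}]$ has as its first $k$ columns the first $k$ columns of the $m\times m$ identity matrix (i.e. $a^{(2k)}_{ij}=\delta_{ij}$ for $1\leq j\leq k$), and for $k+1\leq j\leq n$, $$a^{(2k)}_{ij}=\begin{cases}(-1)^{k+i}\dfrac{m^{1\dots k}_{1\dots i-1,\,i+1\dots k,\,j}}{m_k} & \text{if } 1\leq i\leq k,\\[2mm] \dfrac{m^{1\dots k\, i}_{1\dots k\, j}}{m_k} & \text{if } k+1\leq i\leq m.\end{cases}$$
   Context: Gauss-Jordan procedure: for $A\in M_{m,n}(\mathbb{R})$ set $A^{(0)}=A$. For $k\geq 0$, if $A^{(2k)}=[a^{(2k)}_{ij}]$ is defined and $a^{(2k)}_{k+1,k+1}\neq 0$, let $\mathcal{G}_{2k+1}$ be the $m\times m$ diagonal matrix with all diagonal entries $1$ except the $(k+1,k+1)$ entry, which is $1/a^{(2k)}_{k+1,k+1}$, and set $A^{(2k+1)}=\mathcal{G}_{2k+1}A^{(2k)}=[a^{(2k+1)}_{ij}]$; then let $\mathcal{G}_{2k+2}=[g_{ij}]_{m\times m}$ with $g_{ii}=1$, $g_{i,k+1}=-a^{(2k+1)}_{i,k+1}$ for $i\neq k+1$, and all other entries $0$, and set $A^{(2k+2)}=\mathcal{G}_{2k+2}A^{(2k+1)}$. A matrix $A$ of rank $r\geq 1$ is diagonally eliminable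 up to $r$ if for each $k=1,\dots,r$ the matrix $A^{(2k-2)}$ is defined and $a^{(2k-2)}_{kk}\neq 0$. Minors: for $1\leq i_1<\dots<i_p\leq m$, $1\leq j_1<\dots<j_p\leq n$, $m^{i_1\dots i_p}_{j_1\dots j_p}$ is the determinant of the submatrix of $A$ with rows $i_1,\dots,i_p$ and columns $j_1,\dots,j_p$; thus $m^{1\dots k}_{1\dots i-1,\,i+1\dots k,\,j}$ uses rows $1,\dots,k$ and columns $1,\dots,k$ with $i$ removed and $j$ appended, and $m^{1\dots k\,i}_{1\dots k\,j}$ uses rows $1,\dots,k,i$ and columns $1,\dots,k,j$. $m_k=m^{1\dots k}_{1\dots k}$ and $m_0=1$. *)

theory Defs
  imports "Jordan_Normal_Form.DL_Rank" "Jordan_Normal_Form.DL_Submatrix"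
begin

text \<open>Gauss-Jordan procedure. Indices are 0-based: the paper's pivot position (k+1,k+1)
  is (k,k) here.\<close>

definition GJ_scale :: "real mat \<Rightarrow> nat \<Rightarrow> real mat" where
  "GJ_scale B k = mat (dim_row B) (dim_row B)
     (\<lambda>(i,j). if i = j then (if i = k then 1 / (B $$ (k,k)) else 1) else 0)"

definition GJ_elim :: "real mat \<Rightarrow> nat \<Rightarrow> real mat" where
  "GJ_elim B k = mat (dim_row B) (dim_row B)
     (\<lambda>(i,j). if i = j then 1 else if j = k then - (B $$ (i,k)) else 0)"

text \<open>GJ A t is the paper's A^(t):  A^(2k+1) = G_{2k+1} A^(2k),  A^(2k+2) = G_{2k+2} A^(2k+1).\<close>
fun GJ :: "real mat \<Rightarrow> nat \<Rightarrow> real mat" where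
  "GJ A 0 = A"
| "GJ A (Suc t) = (if even t then GJ_scale (GJ A t) (t div 2) * GJ A t
                   else GJ_elim (GJ A t) (t div 2) * GJ A t)"

text \<open>Diagonally eliminable up to r (paper's 1-based a^(2k-2)_{kk} is entry (k-1,k-1)).
  Definedness of A^(2k-2) follows from nonzero earlier pivots.\<close>
definition diag_eliminable :: "real mat \<Rightarrow> nat \<Rightarrow> bool" where
  "diag_eliminable A r \<longleftrightarrow> (\<forall>k\<in>{1..r}. GJ A (2*k - 2) $$ (k - 1, k - 1) \<noteq> 0)"

definition minor :: "real mat \<Rightarrow> nat set \<Rightarrow> nat set \<Rightarrow> real" where
  "minor A I J = det (submatrix A I J)"

end

theory Submission
  imports Defs
begin


lemma GJ_scale_carrier: "B \<in> carrier_mat m n \<Longrightarrow> GJ_scale B k \<in> carrier_mat m m"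
  by (simp add: GJ_scale_def)
lemma GJ_elim_carrier: "B \<in> carrier_mat m n \<Longrightarrow> GJ_elim B k \<in> carrier_mat m m"
  by (simp add: GJ_elim_def)

lemma GJ_carrier: "A \<in> carrier_mat m n \<Longrightarrow> GJ A t \<in> carrier_mat m n"
  by (induction t) (auto intro!: mult_carrier_mat GJ_scale_carrier GJ_elim_carrier)

lemma GJ_step: "GJ A (2*Suc k) = GJ_elim (GJ_scale (GJ A (2*k)) k * GJ A (2*k)) k
     * (GJ_scale (GJ A (2*k)) k * GJ A (2*k))"
proof -
  have "2 * Suc k = Suc (Suc (2*k))" by simp
  then show ?thesis by simp
qed

lemma scale_entry:
  assumes B: "B \<in> carrier_mat m n" and k: "k < m" and i: "i < m" and j: "j < n"
  shows "(GJ_scale B k * B) $$ (i,j) = (if i = k then B$$(i,j) / B$$(k,k) else B$$(i,j))"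
proof -
  have "(GJ_scale B k * B) $$ (i,j) = (\<Sum>l<m. GJ_scale B k $$ (i,l) * B $$ (l,j))"
    using B i j by (simp add: GJ_scale_def scalar_prod_def atLeast0LessThan)
  also have "\<dots> = (\<Sum>l<m. if l = i then (if i = k then 1 / B$$(k,k) else 1) * B $$ (l,j) else 0)"
    by (rule sum.cong) (use B i in \<open>auto simp: GJ_scale_def\<close>)
  also have "\<dots> = (if i = k then B$$(i,j) / B$$(k,k) else B$$(i,j))"
    using i by simp
  finally show ?thesis .
qed

lemma elim_entry:
  assumes B: "B \<in> carrier_mat m n" and k: "k < m" and i: "i < m" and j: "j < n"
  shows "(GJ_elim B k * B) $$ (i,j) = (if i = k then B$$(i,j) else B$$(i,j) - B$$(i,k) * B$$(k,j))"
proof (cases "i = k")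
  case True
  have "(GJ_elim B k * B) $$ (i,j) = (\<Sum>l<m. GJ_elim B k $$ (i,l) * B $$ (l,j))"
    using B i j by (simp add: GJ_elim_def scalar_prod_def atLeast0LessThan)
  also have "\<dots> = (\<Sum>l<m. if l = i then B $$ (l,j) else 0)"
    by (rule sum.cong) (use B i True in \<open>auto simp: GJ_elim_def\<close>)
  finally show ?thesis using True i by simp
next
  case False
  have "(GJ_elim B k * B) $$ (i,j) = (\<Sum>l<m. GJ_elim B k $$ (i,l) * B $$ (l,j))"
    using B i j by (simp add: GJ_elim_def scalar_prod_def atLeast0LessThan)
  also have "\<dots> = (\<Sum>l<m. (if l = i then B $$ (l,j) else 0) + (if l = k then - B$$(i,k) * B $$ (l,j) else 0))"
    by (rule sum.cong) (use B i k False in \<open>auto simp: GJ_elim_def\<close>)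
  also have "\<dots> = B$$(i,j) - B$$(i,k) * B$$(k,j)"
    using i k by (simp add: sum.distrib)
  finally show ?thesis using False by simp
qed

lemma col_id_mult:
  fixes X Y :: "real mat"
  assumes X: "X \<in> carrier_mat m m" and Y: "Y \<in> carrier_mat m m" and s: "s < m"
    and hX: "\<And>r. r < m \<Longrightarrow> X $$ (r,s) = (if r = s then 1 else 0)"
    and hY: "\<And>r. r < m \<Longrightarrow> Y $$ (r,s) = (if r = s then 1 else 0)"
    and r: "r < m"
  shows "(X * Y) $$ (r,s) = (if r = s then 1 else 0)"
proof -
  have "(X * Y) $$ (r,s) = (\<Sum>l<m. X $$ (r,l) * Y $$ (l,s))"
    using X Y r s by (simp add: scalar_prod_def atLeast0LessThan)
  also have "\<dots> = (\<Sum>l<m. if l = s then X $$ (r,l) else 0)"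
    by (rule sum.cong) (use hY in simp_all)
  also have "\<dots> = X $$ (r,s)" using s by simp
  finally show ?thesis using hX r by simp
qed

lemma scale_col: "B \<in> carrier_mat m n \<Longrightarrow> r < m \<Longrightarrow> s < m \<Longrightarrow> s \<noteq> k \<Longrightarrow>
   GJ_scale B k $$ (r,s) = (if r = s then 1 else 0)"
  by (simp add: GJ_scale_def)
lemma elim_col: "B \<in> carrier_mat m n \<Longrightarrow> r < m \<Longrightarrow> s < m \<Longrightarrow> s \<noteq> k \<Longrightarrow>
   GJ_elim B k $$ (r,s) = (if r = s then 1 else 0)"
  by (simp add: GJ_elim_def)

lemma invariant:
  assumes A: "A \<in> carrier_mat m n"
  shows "k \<le> m \<Longrightarrow> k \<le> n \<Longrightarrow> (\<forall>t<k. GJ A (2*t) $$ (t,t) \<noteq> 0) \<Longrightarrow>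
    (\<forall>i<m. \<forall>j<k. GJ A (2*k) $$ (i,j) = (if i = j then 1 else 0)) \<and>
    (\<exists>L \<in> carrier_mat m m. (\<forall>r<m. \<forall>s. k \<le> s \<and> s < m \<longrightarrow> L$$(r,s) = (if r = s then 1 else 0))
        \<and> GJ A (2*k) = L * A)"
proof (induction k)
  case 0
  have "A = 1\<^sub>m m * A" using A by simp
  then show ?case by (intro conjI, simp, intro bexI[of _ "1\<^sub>m m"]) auto
next
  case (Suc k)
  let ?B = "GJ A (2*k)"
  let ?S = "GJ_scale ?B k"
  let ?B1 = "?S * ?B"
  let ?E = "GJ_elim ?B1 k"
  have km: "k < m" and kn: "k < n" using Suc by auto
  from Suc.IH Suc.prems have IH1: "\<And>i j. i<m \<Longrightarrow> j<k \<Longrightarrow> ?B $$ (i,j) = (if i = j then 1 else 0)"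
    and IH2: "\<exists>L \<in> carrier_mat m m. (\<forall>r<m. \<forall>s. k \<le> s \<and> s < m \<longrightarrow> L$$(r,s) = (if r = s then 1 else 0))
        \<and> ?B = L * A" by auto
  have piv: "?B $$ (k,k) \<noteq> 0" using Suc.prems by auto
  have B: "?B \<in> carrier_mat m n" by (rule GJ_carrier[OF A])
  have S: "?S \<in> carrier_mat m m" by (rule GJ_scale_carrier[OF B])
  have B1: "?B1 \<in> carrier_mat m n" using S B by simp
  have E: "?E \<in> carrier_mat m m" by (rule GJ_elim_carrier[OF B1])
  have step: "GJ A (2*Suc k) = ?E * ?B1" by (rule GJ_step)
  have B1e: "?B1 $$ (i,j) = (if i = k then ?B$$(i,j) / ?B$$(k,k) else ?B$$(i,j))" if "i<m" "j<n" for i j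
    using scale_entry[OF B km that] .
  have B2e: "(?E * ?B1) $$ (i,j) = (if i = k then ?B1$$(i,j) else ?B1$$(i,j) - ?B1$$(i,k) * ?B1$$(k,j))"
    if "i<m" "j<n" for i j
    using elim_entry[OF B1 km that] .
  have part1: "\<forall>i<m. \<forall>j<Suc k. GJ A (2*Suc k) $$ (i,j) = (if i = j then 1 else 0)"
  proof (intro allI impI)
    fix i j assume i: "i < m" and j: "j < Suc k"
    have jn: "j < n" using j kn by simp
    show "GJ A (2*Suc k) $$ (i,j) = (if i = j then 1 else 0)"
    proof (cases "j < k")
      case True
      then show ?thesis unfolding step B2e[OF i jn]
        using B1e[OF i jn] B1e[OF km jn] IH1[OF i True] IH1[OF km True] by auto
    next
      case False
      then have "j = k" using j by simp
      then show ?thesis unfolding step B2e[OF i jn]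
        using B1e[OF i jn] B1e[OF km jn] piv by auto
    qed
  qed
  from IH2 obtain L where L: "L \<in> carrier_mat m m"
    and Lc: "\<And>r s. r<m \<Longrightarrow> k \<le> s \<Longrightarrow> s < m \<Longrightarrow> L$$(r,s) = (if r = s then 1 else 0)"
    and BL: "?B = L * A" by auto
  have "GJ A (2*Suc k) = ?E * (?S * (L * A))" using step BL by simp
  also have "\<dots> = (?E * ?S * L) * A" using E S L A
    by (simp add: assoc_mult_mat[of _ m m _ m _ n] )
  finally have eq: "GJ A (2*Suc k) = (?E * ?S * L) * A" .
  have col: "(?E * ?S * L) $$ (r,s) = (if r = s then 1 else 0)"
    if "r < m" "Suc k \<le> s" "s < m" for r s
  proof -
    have sk: "s \<noteq> k" using that by simp
    have hE: "\<And>r. r<m \<Longrightarrow> ?E $$ (r,s) = (if r = s then 1 else 0)"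
      using elim_col[OF B1 _ \<open>s<m\<close> sk] by blast
    have hS: "\<And>r. r<m \<Longrightarrow> ?S $$ (r,s) = (if r = s then 1 else 0)"
      using scale_col[OF B _ \<open>s<m\<close> sk] by blast
    have "(?E * ?S) $$ (r,s) = (if r = s then 1 else 0)" if "r < m" for r
      by (rule col_id_mult[OF E S \<open>s<m\<close> hE hS that])
    then show ?thesis
      by (intro col_id_mult[OF mult_carrier_mat[OF E S] L \<open>s<m\<close> _ _ \<open>r<m\<close>]) (use Lc that in auto)
  qed
  have ESL: "?E * ?S * L \<in> carrier_mat m m" using E S L by simp
  show ?case
    apply (rule conjI[OF part1])
    apply (rule bexI[OF _ ESL])
    apply (rule conjI[OF _ eq])
    using col by simp
qed



lemma pick_eq:
  fixes f :: "nat \<Rightarrow> nat" and p :: nat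
  assumes mono: "\<And>x y. x < y \<Longrightarrow> y < p \<Longrightarrow> f x < (f y :: nat)"
    and img: "S = f ` {..<p}"
  shows "a < p \<Longrightarrow> pick S a = f a"
proof (induction a)
  case 0
  show ?case unfolding pick.simps
  proof (rule Least_equality)
    show "f 0 \<in> S" using img 0 by auto
    fix y assume "y \<in> S"
    then obtain b where "b < p" "y = f b" using img by auto
    then show "f 0 \<le> y" using mono by (cases "b = 0") (auto intro: less_imp_le)
  qed
next
  case (Suc a)
  then have IH: "pick S a = f a" by simp
  show ?case unfolding pick.simps IH
  proof (rule Least_equality)
    show "f (Suc a) \<in> S \<and> f a < f (Suc a)" using img Suc.prems mono by auto
    fix y assume "y \<in> S \<and> f a < y"
    then obtain b where b: "b < p" "y = f b" "f a < f b" using img by auto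
    have "\<not> b \<le> a"
    proof
      assume "b \<le> a"
      then have "f b \<le> f a" using mono Suc.prems by (cases "b = a") (auto intro: less_imp_le)
      then show False using b by simp
    qed
    then have "Suc a \<le> b" by simp
    then show "f (Suc a) \<le> y" using mono b by (cases "b = Suc a") (auto intro: less_imp_le)
  qed
qed

definition smat :: "real mat \<Rightarrow> (nat \<Rightarrow> nat) \<Rightarrow> (nat \<Rightarrow> nat) \<Rightarrow> nat \<Rightarrow> nat \<Rightarrow> real mat" where
  "smat X f g p q = mat p q (\<lambda>(a,b). X $$ (f a, g b))"

lemma inj_of_mono:
  fixes f :: "nat \<Rightarrow> nat" and p :: nat
  assumes mono: "\<And>x y. x < y \<Longrightarrow> y < p \<Longrightarrow> f x < (f y :: nat)"
  shows "inj_on f {..<p}"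
proof
  fix x y assume "x \<in> {..<p}" "y \<in> {..<p}" "f x = f y"
  then show "x = y" using mono[of x y] mono[of y x] by (cases x y rule: linorder_cases) auto
qed

lemma submatrix_smat:
  fixes f g :: "nat \<Rightarrow> nat" and p q :: nat
  assumes X: "X \<in> carrier_mat m n"
    and fm: "\<And>x y. x < y \<Longrightarrow> y < p \<Longrightarrow> f x < (f y :: nat)"
    and fi: "S = f ` {..<p}" and fS: "S \<subseteq> {..<m}"
    and gm: "\<And>x y. x < y \<Longrightarrow> y < q \<Longrightarrow> g x < (g y :: nat)"
    and gi: "T = g ` {..<q}" and gS: "T \<subseteq> {..<n}"
  shows "submatrix X S T = smat X f g p q"
proof -
  have c1: "card {i. i < dim_row X \<and> i \<in> S} = p"
  proof -
    have "{i. i < dim_row X \<and> i \<in> S} = S" using X fS by auto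
    then show ?thesis using card_image[OF inj_of_mono[OF fm]] fi by (simp del: card_image)
  qed
  have c2: "card {i. i < dim_col X \<and> i \<in> T} = q"
  proof -
    have "{i. i < dim_col X \<and> i \<in> T} = T" using X gS by auto
    then show ?thesis using card_image[OF inj_of_mono[OF gm]] gi by (simp del: card_image)
  qed
  show ?thesis unfolding submatrix_def smat_def c1 c2
    by (rule eq_matI) (auto simp: pick_eq[OF fm fi] pick_eq[OF gm gi])
qed

lemma smat_prod:
  assumes L: "L \<in> carrier_mat m m" and A: "A \<in> carrier_mat m n"
    and fm: "\<And>a. a < p \<Longrightarrow> f a < m" and finj: "inj_on f {..<p}"
    and gn: "\<And>b. b < q \<Longrightarrow> g b < n"
    and z: "\<And>a s. a < p \<Longrightarrow> s < m \<Longrightarrow> s \<notin> f ` {..<p} \<Longrightarrow> L $$ (f a, s) = 0"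
  shows "smat (L * A) f g p q = smat L f f p p * smat A f g p q"
proof (rule eq_matI)
  fix a b assume a: "a < dim_row (smat L f f p p * smat A f g p q)"
    and b: "b < dim_col (smat L f f p p * smat A f g p q)"
  then have a: "a < p" and b: "b < q" by (auto simp: smat_def)
  have "smat (L * A) f g p q $$ (a,b) = (\<Sum>s<m. L $$ (f a, s) * A $$ (s, g b))"
    using a b L A fm gn by (simp add: smat_def scalar_prod_def atLeast0LessThan)
  also have "\<dots> = (\<Sum>s\<in>f ` {..<p}. L $$ (f a, s) * A $$ (s, g b))"
    by (rule sum.mono_neutral_right) (use fm z a in auto)
  also have "\<dots> = (\<Sum>t<p. L $$ (f a, f t) * A $$ (f t, g b))"
    by (simp add: sum.reindex[OF finj])
  also have "\<dots> = (smat L f f p p * smat A f g p q) $$ (a,b)"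
    using a b by (simp add: smat_def scalar_prod_def atLeast0LessThan)
  finally show "smat (L * A) f g p q $$ (a,b) = (smat L f f p p * smat A f g p q) $$ (a,b)" .
qed (auto simp: smat_def)



lemma det_D1:
  assumes L: "L \<in> carrier_mat m m" and ki: "k \<le> i" and im: "i < m"
    and Lc: "\<And>r. r < m \<Longrightarrow> L $$ (r,i) = (if r = i then 1 else 0)"
  shows "det (smat L (\<lambda>a. if a < k then a else i) (\<lambda>a. if a < k then a else i) (Suc k) (Suc k))
       = det (smat L (\<lambda>a. a) (\<lambda>a. a) k k)"
proof -
  let ?r = "\<lambda>a. if a < k then a else i"
  let ?M = "smat L ?r ?r (Suc k) (Suc k)"
  have M: "?M \<in> carrier_mat (Suc k) (Suc k)" by (simp add: smat_def)
  have "det ?M = (\<Sum>a<Suc k. ?M $$ (a,k) * cofactor ?M a k)"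
    by (rule laplace_expansion_column[OF M]) simp
  also have "\<dots> = (\<Sum>a<Suc k. if a = k then cofactor ?M a k else 0)"
  proof (rule sum.cong)
    fix a assume a: "a \<in> {..<Suc k}"
    have "?M $$ (a,k) = L $$ (?r a, i)" using a by (simp add: smat_def)
    also have "\<dots> = (if a = k then 1 else 0)" using Lc[of "?r a"] a ki im by auto
    finally show "?M $$ (a,k) * cofactor ?M a k = (if a = k then cofactor ?M a k else 0)" by simp
  qed simp
  also have "\<dots> = cofactor ?M k k" by simp
  also have "\<dots> = det (mat_delete ?M k k)" by (simp add: cofactor_def)
  also have "mat_delete ?M k k = smat L (\<lambda>a. a) (\<lambda>a. a) k k"
    by (rule eq_matI) (auto simp: mat_delete_def smat_def)
  finally show ?thesis .
qed

lemma det_D2: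
  assumes B: "B \<in> carrier_mat m n" and ki: "k \<le> i" and im: "i < m" and kj: "k \<le> j" and jn: "j < n"
    and Bc: "\<And>r c. r < m \<Longrightarrow> c < k \<Longrightarrow> B $$ (r,c) = (if r = c then 1 else 0)"
  shows "det (smat B (\<lambda>a. if a < k then a else i) (\<lambda>a. if a < k then a else j) (Suc k) (Suc k))
       = B $$ (i,j)"
proof -
  let ?r = "\<lambda>a. if a < k then a else i"
  let ?g = "\<lambda>a. if a < k then a else j"
  let ?N = "smat B ?r ?g (Suc k) (Suc k)"
  have N: "?N \<in> carrier_mat (Suc k) (Suc k)" by (simp add: smat_def)
  have ut: "upper_triangular ?N"
    unfolding upper_triangular_def
  proof (intro allI impI)
    fix a b assume a: "a < dim_row ?N" and b: "b < a"
    then have "a < Suc k" by (simp add: smat_def)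
    then have "?N $$ (a,b) = B $$ (?r a, b)" using b by (simp add: smat_def)
    also have "\<dots> = 0" using Bc[of "?r a" b] b \<open>a < Suc k\<close> ki im by auto
    finally show "?N $$ (a,b) = 0" .
  qed
  have "det ?N = (\<Prod>a = 0..<Suc k. ?N $$ (a,a))"
    using det_upper_triangular[OF ut N] prod_list_diag_prod[of ?N] N by simp
  also have "\<dots> = (\<Prod>a = 0..<k. ?N $$ (a,a)) * ?N $$ (k,k)" by simp
  also have "(\<Prod>a = 0..<k. ?N $$ (a,a)) = (\<Prod>a = 0..<k. 1)"
    by (rule prod.cong) (use Bc ki im in \<open>auto simp: smat_def\<close>)
  also have "?N $$ (k,k) = B $$ (i,j)" by (simp add: smat_def)
  finally show ?thesis by simp
qed

lemma det_D3:
  assumes B: "B \<in> carrier_mat m n" and ik: "i < k" and km: "k \<le> m" and kj: "k \<le> j" and jn: "j < n"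
    and Bc: "\<And>r c. r < m \<Longrightarrow> c < k \<Longrightarrow> B $$ (r,c) = (if r = c then 1 else 0)"
  shows "det (smat B (\<lambda>a. a) (\<lambda>b. if b < i then b else if b < k - 1 then Suc b else j) k k)
       = (-1) ^ (k + i + 1) * B $$ (i,j)"
proof -
  let ?g = "\<lambda>b. if b < i then b else if b < k - 1 then Suc b else j"
  let ?N = "smat B (\<lambda>a. a) ?g k k"
  obtain l where kl: "k = Suc l" using ik by (cases k) auto
  have N: "?N \<in> carrier_mat k k" by (simp add: smat_def)
  have gne: "?g y \<noteq> x \<and> (?g y = x' \<longleftrightarrow> (if y < i then y else Suc y) = x')" if "y < l" "x = i" "x' < k" for y x x'
    using that kl by auto
  have del0: "det (mat_delete ?N a l) = 0" if a: "a < k" "a \<noteq> i" for a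
  proof -
    define x0 where "x0 = (if i < a then i else i - 1)"
    have x0l: "x0 < l" using a ik kl by (auto simp: x0_def)
    have sk: "(if x0 < a then x0 else Suc x0) = i" using a by (auto simp: x0_def)
    have D: "mat_delete ?N a l \<in> carrier_mat l l" using mat_delete_carrier[OF N] kl by simp
    have "det (mat_delete ?N a l) = (\<Sum>y<l. mat_delete ?N a l $$ (x0,y) * cofactor (mat_delete ?N a l) x0 y)"
      by (rule laplace_expansion_row[OF D x0l])
    also have "\<dots> = (\<Sum>y<l. 0)"
    proof (rule sum.cong)
      fix y assume y: "y \<in> {..<l}"
      have "mat_delete ?N a l $$ (x0,y) = ?N $$ (i, y)"
        using x0l y kl sk by (simp add: mat_delete_def smat_def)
      also have "\<dots> = B $$ (i, ?g y)" using y kl ik by (simp add: smat_def)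
      also have "\<dots> = 0" using Bc[of i "?g y"] y kl ik km by auto
      finally show "mat_delete ?N a l $$ (x0,y) * cofactor (mat_delete ?N a l) x0 y = 0" by simp
    qed simp
    finally show ?thesis by simp
  qed
  have del1: "mat_delete ?N i l = 1\<^sub>m l"
  proof (rule eq_matI)
    fix x y assume x: "x < dim_row (1\<^sub>m l :: real mat)" and y: "y < dim_col (1\<^sub>m l :: real mat)"
    then have x: "x < l" and y: "y < l" by auto
    have "mat_delete ?N i l $$ (x,y) = ?N $$ (if x < i then x else Suc x, y)"
      using x y kl by (simp add: mat_delete_def smat_def)
    also have "\<dots> = B $$ (if x < i then x else Suc x, ?g y)" using x y kl by (simp add: smat_def)
    also have "\<dots> = (if x = y then 1 else 0)"
      using Bc[of "if x < i then x else Suc x" "?g y"] x y kl km by auto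
    finally show "mat_delete ?N i l $$ (x,y) = 1\<^sub>m l $$ (x,y)" using x y by simp
  qed (use kl in \<open>auto simp: smat_def\<close>)
  have "det ?N = (\<Sum>a<k. ?N $$ (a,l) * cofactor ?N a l)"
    by (rule laplace_expansion_column[OF N]) (simp add: kl)
  also have "\<dots> = (\<Sum>a<k. if a = i then B $$ (i,j) * (-1)^(i+l) else 0)"
  proof (rule sum.cong)
    fix a assume a: "a \<in> {..<k}"
    have Na: "?N $$ (a,l) = B $$ (a,j)" using a kl ik by (simp add: smat_def)
    show "?N $$ (a,l) * cofactor ?N a l = (if a = i then B $$ (i,j) * (-1)^(i+l) else 0)"
      unfolding Na cofactor_def using del0[of a] del1 a by auto
  qed simp
  also have "\<dots> = B $$ (i,j) * (-1)^(i+l)" using ik by simp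
  also have "(-1::real)^(i+l) = (-1)^(k+i+1)"
  proof -
    have "k + i + 1 = (i + l) + 2" using kl by simp
    then show ?thesis by (simp add: power_add)
  qed
  finally show ?thesis by simp
qed



lemma rank_le_nr:
  fixes A :: "real mat"
  assumes A: "A \<in> carrier_mat m n"
  shows "vec_space.rank m A \<le> m"
proof -
  interpret V: vec_space "TYPE(real)" m .
  obtain S where S: "maximal S (\<lambda>T. T \<subseteq> set (cols A) \<and> V.lin_indpt T)"
    using maximal_exists[of "(\<lambda>T. T \<subseteq> set (cols A) \<and> V.lin_indpt T)" "card (set (cols A))" "{}"]
    by (meson List.finite_set card_mono empty_iff empty_subsetI V.finite_lin_indpt2 rev_finite_subset)
  have sub: "S \<subseteq> carrier_vec m" using S cols_dim A unfolding maximal_def by blast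
  have li: "V.lin_indpt S" using S unfolding maximal_def by blast
  have "card S \<le> V.dim" using V.li_le_dim(2)[OF V.fin_dim _ li] sub by simp
  then show ?thesis using V.rank_card_indpt[OF A S] V.dim_is_n by simp
qed



theorem theorem2p6:
  fixes A :: "real mat" and m n r k :: nat
  assumes "A \<in> carrier_mat m n"
    and "vec_space.rank m A = r"
    and "r > 1"
    and "diag_eliminable A r"
    and "k < r"
  shows "(\<forall>i<m. \<forall>j<k. GJ A (2*k) $$ (i,j) = (if i = j then 1 else 0))
    \<and> (\<forall>j. k \<le> j \<and> j < n \<longrightarrow>
         (\<forall>i<k. GJ A (2*k) $$ (i,j) =
             (-1) ^ (k + i + 1) * minor A {0..<k} (({0..<k} - {i}) \<union> {j})
               / minor A {0..<k} {0..<k})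
       \<and> (\<forall>i. k \<le> i \<and> i < m \<longrightarrow> GJ A (2*k) $$ (i,j) =
             minor A ({0..<k} \<union> {i}) ({0..<k} \<union> {j}) / minor A {0..<k} {0..<k}))"
proof -
  note A = assms(1)
  have km: "k < m" using rank_le_nr[OF A] assms(2,5) by simp
  have kn: "k < n" using vec_space.rank_le_nc[OF A] assms(2,5) by simp
  have piv: "\<forall>t<k. GJ A (2*t) $$ (t,t) \<noteq> 0"
  proof (intro allI impI)
    fix t assume "t < k"
    then have "Suc t \<in> {1..r}" using assms(5) by simp
    then have "GJ A (2 * Suc t - 2) $$ (Suc t - 1, Suc t - 1) \<noteq> 0"
      using assms(4) unfolding diag_eliminable_def by blast
    then show "GJ A (2*t) $$ (t,t) \<noteq> 0" by simp
  qed
  define B where "B = GJ A (2*k)"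
  have inv: "(\<forall>i<m. \<forall>j<k. B $$ (i,j) = (if i = j then 1 else 0)) \<and>
    (\<exists>L \<in> carrier_mat m m. (\<forall>r<m. \<forall>s. k \<le> s \<and> s < m \<longrightarrow> L$$(r,s) = (if r = s then 1 else 0))
        \<and> B = L * A)"
    unfolding B_def by (rule invariant[OF A]) (use km kn piv in auto)
  then have Bc: "\<And>r c. r < m \<Longrightarrow> c < k \<Longrightarrow> B $$ (r,c) = (if r = c then 1 else 0)" by blast
  from inv obtain L where L: "L \<in> carrier_mat m m"
    and Lc: "\<And>r s. r < m \<Longrightarrow> k \<le> s \<Longrightarrow> s < m \<Longrightarrow> L$$(r,s) = (if r = s then 1 else 0)"
    and BL: "B = L * A" by blast
  have B: "B \<in> carrier_mat m n" unfolding B_def by (rule GJ_carrier[OF A])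
  define mk where "mk = minor A {0..<k} {0..<k}"
  define LK where "LK = smat L (\<lambda>a. a) (\<lambda>a. a) k k"
  have idimg: "{0..<k} = (\<lambda>a. a) ` {..<k}" by auto
  have mk_eq: "mk = det (smat A (\<lambda>a. a) (\<lambda>a. a) k k)"
    unfolding mk_def minor_def
    by (rule arg_cong[where f = det], rule submatrix_smat[OF A _ idimg _ _ idimg]) (use km kn in auto)
  have "smat B (\<lambda>a. a) (\<lambda>a. a) k k = LK * smat A (\<lambda>a. a) (\<lambda>a. a) k k"
    unfolding BL LK_def
    by (rule smat_prod[OF L A]) (use km kn Lc in auto)
  moreover have "smat B (\<lambda>a. a) (\<lambda>a. a) k k = 1\<^sub>m k"
    by (rule eq_matI) (use Bc km in \<open>auto simp: smat_def\<close>)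
  ultimately have "det LK * mk = 1" unfolding mk_eq
    using det_mult[of LK k "smat A (\<lambda>a. a) (\<lambda>a. a) k k"] by (simp add: LK_def smat_def)
  then have mk0: "mk \<noteq> 0" by auto
  with \<open>det LK * mk = 1\<close> have LKe: "det LK = 1 / mk" by (simp add: field_simps)
  have part2: "B $$ (i,j) = minor A ({0..<k} \<union> {i}) ({0..<k} \<union> {j}) / mk"
    if i: "k \<le> i" "i < m" and j: "k \<le> j" "j < n" for i j
  proof -
    let ?r = "\<lambda>a. if a < k then a else i"
    let ?g = "\<lambda>a. if a < k then a else j"
    have rm: "\<And>x y. x < y \<Longrightarrow> y < Suc k \<Longrightarrow> ?r x < ?r y" using i by auto
    have gm: "\<And>x y. x < y \<Longrightarrow> y < Suc k \<Longrightarrow> ?g x < ?g y" using j by auto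
    have ri: "{0..<k} \<union> {i} = ?r ` {..<Suc k}"
    proof
      show "{0..<k} \<union> {i} \<subseteq> ?r ` {..<Suc k}"
      proof
        fix x assume "x \<in> {0..<k} \<union> {i}"
        then show "x \<in> ?r ` {..<Suc k}"
          by (cases "x < k") (auto intro: image_eqI[where x = k] image_eqI[where x = x])
      qed
    qed auto
    have gi: "{0..<k} \<union> {j} = ?g ` {..<Suc k}"
    proof
      show "{0..<k} \<union> {j} \<subseteq> ?g ` {..<Suc k}"
      proof
        fix x assume "x \<in> {0..<k} \<union> {j}"
        then show "x \<in> ?g ` {..<Suc k}"
          by (cases "x < k") (auto intro: image_eqI[where x = k] image_eqI[where x = x])
      qed
    qed auto
    have minR: "minor A ({0..<k} \<union> {i}) ({0..<k} \<union> {j}) = det (smat A ?r ?g (Suc k) (Suc k))"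
      unfolding minor_def
      by (rule arg_cong[where f = det], rule submatrix_smat[OF A rm ri _ gm gi]) (use km kn i j in auto)
    have "smat B ?r ?g (Suc k) (Suc k) = smat L ?r ?r (Suc k) (Suc k) * smat A ?r ?g (Suc k) (Suc k)"
      unfolding BL
    proof (rule smat_prod[OF L A])
      show "inj_on ?r {..<Suc k}" by (rule inj_of_mono[OF rm])
      fix a s assume a: "a < Suc k" and s: "s < m" and sn: "s \<notin> ?r ` {..<Suc k}"
      have "k \<le> s" "s \<noteq> i" "?r a \<noteq> s" using sn a by (auto simp: ri[symmetric])
      then show "L $$ (?r a, s) = 0" using Lc[of "?r a" s] s a i km by auto
    qed (use km kn i j in auto)
    then have "B $$ (i,j) = det (smat L ?r ?r (Suc k) (Suc k)) * det (smat A ?r ?g (Suc k) (Suc k))"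
      using det_D2[OF B i j Bc] det_mult[of "smat L ?r ?r (Suc k) (Suc k)" "Suc k" "smat A ?r ?g (Suc k) (Suc k)"]
      by (simp add: smat_def)
    also have "det (smat L ?r ?r (Suc k) (Suc k)) = det LK"
      unfolding LK_def by (rule det_D1[OF L i]) (use Lc i in auto)
    finally show ?thesis using LKe minR by simp
  qed
  have part3: "B $$ (i,j) = (-1) ^ (k + i + 1) * minor A (({0..<k})) (({0..<k} - {i}) \<union> {j}) / mk"
    if i: "i < k" and j: "k \<le> j" "j < n" for i j
  proof -
    let ?g = "\<lambda>b. if b < i then b else if b < k - 1 then Suc b else j"
    have gm: "\<And>x y. x < y \<Longrightarrow> y < k \<Longrightarrow> ?g x < ?g y" using j i by auto
    have gi: "({0..<k} - {i}) \<union> {j} = ?g ` {..<k}"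
    proof
      show "({0..<k} - {i}) \<union> {j} \<subseteq> ?g ` {..<k}"
      proof
        fix x assume x: "x \<in> ({0..<k} - {i}) \<union> {j}"
        show "x \<in> ?g ` {..<k}"
        proof (cases "x = j")
          case True
          then show ?thesis using i j by (intro image_eqI[where x = "k - 1"]) auto
        next
          case False
          then have x: "x < k" "x \<noteq> i" using x j by auto
          show ?thesis
          proof (cases "x < i")
            case True
            then show ?thesis using x by (intro image_eqI[where x = x]) auto
          next
            case False
            then show ?thesis using x by (intro image_eqI[where x = "x - 1"]) auto
          qed
        qed
      qed
    next
      show "?g ` {..<k} \<subseteq> ({0..<k} - {i}) \<union> {j}" using i by auto
    qed
    have minC: "minor A {0..<k} (({0..<k} - {i}) \<union> {j}) = det (smat A (\<lambda>a. a) ?g k k)"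
      unfolding minor_def
      by (rule arg_cong[where f = det], rule submatrix_smat[OF A _ idimg _ gm gi]) (use km kn i j in auto)
    have "smat B (\<lambda>a. a) ?g k k = LK * smat A (\<lambda>a. a) ?g k k"
      unfolding BL LK_def
      by (rule smat_prod[OF L A]) (use km kn Lc i j in auto)
    then have "(-1) ^ (k + i + 1) * B $$ (i,j) = det LK * det (smat A (\<lambda>a. a) ?g k k)"
      using det_D3[OF B i _ j Bc] km det_mult[of LK k "smat A (\<lambda>a. a) ?g k k"]
      by (simp add: smat_def LK_def)
    then have "(-1) ^ (k + i + 1) * ((-1) ^ (k + i + 1) * B $$ (i,j))
       = (-1) ^ (k + i + 1) * (minor A {0..<k} (({0..<k} - {i}) \<union> {j}) / mk)"
      using LKe minC by simp
    moreover have "(-1::real) ^ (k + i + 1) * (-1) ^ (k + i + 1) = 1"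
      by (simp add: power_add[symmetric])
    ultimately show ?thesis by (simp add: mult.assoc[symmetric])
  qed
  show ?thesis
    using Bc part2 part3 km unfolding B_def mk_def by auto
qed

end
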